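(* Let $a,b,d\in\mathbb C$ with $a\notin\mathbb Z$ and $d\notin\{0,-1,-2,\dots\}$. Then, as an identity of formal power series in $x,y$, $$\mathrm H_4(a,b;d;x,y)={}_1F_1(a;d;x)\,{}_1F_1(b;1-a;-y)+\sum_{k=1}^\infty\sum_{l=1}^k\frac{(-1)^{k+l}(k-1)!}{(l-1)!\,l!\,(k-l)!}\,\frac{(b)_l}{(1-a)_l(d)_k}\,x^ky^l\,{}_1F_1(a+k;d+k;x)\,{}_1F_1(b+l;1-a+l;-y).$$
   Context: Pochhammer symbol: $(\lambda)_k=\Gamma(\lambda+k)/\Gamma(\lambda)$ for every integer $k$ (possibly negative) whenever defined; $(\lambda)_0=1$. ${}_1F_1(a;c;x)=\sum_{k\ge0}\frac{(a)_k}{(c)_k k!}x^k$. Confluent Horn function $\mathrm H_4(a,b;d;x,y)=\sum_{p,q\ge0}\frac{(a)_{p-q}(b)_q}{(d)_p\,p!\,q!}x^py^q$. All functions are regarded as formal power series in $x,y$; the infinite double sum converges in the formal (degree) topology. *)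

theory Defs
  imports "HOL-Computational_Algebra.Formal_Power_Series"
begin

text \<open>Bivariate formal power series over the complex numbers are modelled as
  complex fps fps: the outer variable is x, the inner variable is y, so the
  coefficient of x^p y^q of F is fps_nth (fps_nth F p) q.\<close>

type_synonym fps2 = "complex fps fps"

definition fpsX2 :: fps2 where "fpsX2 = fps_X"
definition fpsY2 :: fps2 where "fpsY2 = fps_const fps_X"

definition coeff2 :: "fps2 \<Rightarrow> nat \<Rightarrow> nat \<Rightarrow> complex" where
  "coeff2 F p q = fps_nth (fps_nth F p) q"

text \<open>Pochhammer symbol with integer index: (lambda)_k = Gamma(lambda+k)/Gamma(lambda).
  For k = -n < 0 this is 1/((lambda-1)(lambda-2)...(lambda-n)) = 1/(lambda-n)_n.\<close>
definition poch_int :: "complex \<Rightarrow> int \<Rightarrow> complex" where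
  "poch_int lam k = (if 0 \<le> k then pochhammer lam (nat k)
                     else inverse (pochhammer (lam + of_int k) (nat (- k))))"

definition hyp1F1_coeff :: "complex \<Rightarrow> complex \<Rightarrow> nat \<Rightarrow> complex" where
  "hyp1F1_coeff a c k = pochhammer a k / (pochhammer c k * fact k)"

definition hyp1F1_x :: "complex \<Rightarrow> complex \<Rightarrow> fps2" where
  "hyp1F1_x a c = Abs_fps (\<lambda>k. fps_const (hyp1F1_coeff a c k))"

definition hyp1F1_negy :: "complex \<Rightarrow> complex \<Rightarrow> fps2" where
  "hyp1F1_negy a c = fps_const (Abs_fps (\<lambda>k. hyp1F1_coeff a c k * (-1) ^ k))"

definition Horn_H4 :: "complex \<Rightarrow> complex \<Rightarrow> complex \<Rightarrow> fps2" where
  "Horn_H4 a b d = Abs_fps (\<lambda>p. Abs_fps (\<lambda>q.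
      poch_int a (int p - int q) * pochhammer b q / (pochhammer d p * fact p * fact q)))"

definition fps2_sums :: "(nat \<Rightarrow> fps2) \<Rightarrow> fps2 \<Rightarrow> bool" where
  "fps2_sums f S \<longleftrightarrow> (\<forall>N. \<exists>K. \<forall>n\<ge>K. \<forall>p q. p + q < N \<longrightarrow>
       coeff2 (\<Sum>k<n. f k) p q = coeff2 S p q)"

end

theory Submission
  imports Defs
begin

lemma poch_G:
  fixes a w :: complex
  shows "pochhammer (a - w) p = (\<Sum>k\<le>p. of_nat (p choose k) * ((-1)^k * pochhammer w k) * pochhammer (a + of_nat k) (p - k))"
proof (induction p arbitrary: a)
  case 0
  then show ?case by simp
next
  case (Suc p a)
  define g where "g k = ((-1::complex)^k * pochhammer w k)" for k
  define h where "h k = g k * pochhammer (a + of_nat k) (Suc p - k)" for k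
  have gS: "g (Suc k) = - (w + of_nat k) * g k" for k
    by (simp add: g_def pochhammer_rec' algebra_simps)
  have "pochhammer (a - w) (Suc p) = (a - w) * pochhammer (a + 1 - w) p"
    by (simp add: pochhammer_rec algebra_simps)
  also have "\<dots> = (a - w) * (\<Sum>k\<le>p. of_nat (p choose k) * g k * pochhammer (a + 1 + of_nat k) (p - k))"
    using Suc[of "a+1"] by (simp add: g_def algebra_simps)
  also have "\<dots> = (\<Sum>k\<le>p. of_nat (p choose k) * h k) + (\<Sum>k\<le>p. of_nat (p choose k) * h (Suc k))"
  proof -
    have "(a - w) * (of_nat (p choose k) * g k * pochhammer (a + 1 + of_nat k) (p - k))
        = of_nat (p choose k) * h k + of_nat (p choose k) * h (Suc k)" if "k \<le> p" for k
    proof -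
      have e1: "pochhammer (a + of_nat k) (Suc p - k) = (a + of_nat k) * pochhammer (a + 1 + of_nat k) (p - k)"
        using that by (simp add: Suc_diff_le pochhammer_rec algebra_simps)
      show ?thesis unfolding h_def gS e1 by (simp add: algebra_simps)
    qed
    then show ?thesis by (simp add: sum_distrib_left sum.distrib[symmetric])
  qed
  also have "\<dots> = (\<Sum>k\<le>Suc p. of_nat (Suc p choose k) * h k)"
  proof -
    have "(\<Sum>k\<le>Suc p. of_nat (Suc p choose k) * h k)
        = h 0 + (\<Sum>i\<le>p. of_nat (p choose i) * h (Suc i)) + (\<Sum>i\<le>p. of_nat (p choose Suc i) * h (Suc i))"
      by (subst sum.atMost_Suc_shift) (simp add: ring_distribs sum.distrib)
    moreover have "h 0 + (\<Sum>i\<le>p. of_nat (p choose Suc i) * h (Suc i)) = (\<Sum>k\<le>Suc p. of_nat (p choose k) * h k)"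
      by (subst sum.atMost_Suc_shift) simp
    moreover have "(\<Sum>k\<le>Suc p. of_nat (p choose k) * h k) = (\<Sum>k\<le>p. of_nat (p choose k) * h k)"
      by simp
    ultimately show ?thesis by (simp add: algebra_simps)
  qed
  finally show ?case by (simp only: h_def g_def mult.assoc)
qed


lemma vand2:
  assumes "1 \<le> k"
  shows "(\<Sum>l\<in>{1..k}. ((k-1) choose (l-1)) * (q choose l)) = (q + k - 1) choose k"
proof -
  have "(q + k - 1) choose k = (\<Sum>l\<le>k. (q choose l) * ((k-1) choose (k-l)))"
    using vandermonde[of q "k-1" k] assms by simp
  also have "\<dots> = (\<Sum>l\<in>{1..k}. (q choose l) * ((k-1) choose (k-l)))"
    using assms by (intro sum.mono_neutral_right) auto
  also have "\<dots> = (\<Sum>l\<in>{1..k}. ((k-1) choose (l-1)) * (q choose l))"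
  proof (intro sum.cong refl)
    fix l assume "l \<in> {1..k}"
    then have "(k-1) choose (k-l) = (k-1) choose (l-1)"
      using binomial_symmetric[of "l-1" "k-1"] by auto
    then show "(q choose l) * ((k-1) choose (k-l)) = ((k-1) choose (l-1)) * (q choose l)" by simp
  qed
  finally show ?thesis by simp
qed

lemma fact_choose_poch:
  assumes "1 \<le> k"
  shows "fact k * (of_nat ((q + k - 1) choose k) :: complex) = pochhammer (of_nat q) k"
proof -
  have "(of_nat ((q + k - 1) choose k) :: complex) = of_nat (q + k - 1) gchoose k"
    by (simp add: binomial_gbinomial)
  also have "\<dots> = pochhammer (of_nat (q + k - 1) - of_nat k + 1) k / fact k"
    by (rule gbinomial_pochhammer')
  also have "of_nat (q + k - 1) - of_nat k + 1 = (of_nat q :: complex)"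
    using assms by (simp add: of_nat_diff)
  finally show ?thesis by simp
qed

lemma C1:
  fixes a :: complex
  assumes "a \<notin> \<int>"
  shows "poch_int a (int p - int q) * pochhammer (1 - a) q * (-1)^q = pochhammer (a - of_nat q) p"
proof -
  have m: "pochhammer (1 - a) q * (-1)^q = pochhammer (a - of_nat q) q"
    using pochhammer_minus[of "a - 1" q] by (simp add: algebra_simps)
  show ?thesis
  proof (cases "q \<le> p")
    case True
    have "pochhammer (a - of_nat q) p = pochhammer (a - of_nat q) q * pochhammer a (p - q)"
      using pochhammer_product[OF True, of "a - of_nat q"] by simp
    moreover have "poch_int a (int p - int q) = pochhammer a (p - q)"
      using True by (simp add: poch_int_def nat_diff_distrib)
    ultimately show ?thesis using m by (simp add: mult.assoc)
  next
    case False
    have pp: "pochhammer (a - of_nat q) q = pochhammer (a - of_nat q) p * pochhammer (a - of_nat q + of_nat p) (q - p)"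
      using False by (intro pochhammer_product) simp
    have nz: "pochhammer (a - of_nat q + of_nat p) (q - p) \<noteq> 0"
    proof
      assume "pochhammer (a - of_nat q + of_nat p) (q - p) = 0"
      then obtain j where "a - of_nat q + of_nat p = - of_nat j" by (auto simp: pochhammer_eq_0_iff)
      then have "a = of_int (int q - int p - int j)" by (simp add: algebra_simps)
      then show False using assms by (metis Ints_of_int)
    qed
    have "poch_int a (int p - int q) = inverse (pochhammer (a - of_nat q + of_nat p) (q - p))"
      using False by (simp add: poch_int_def nat_diff_distrib algebra_simps)
    then have X: "poch_int a (int p - int q) * pochhammer (a - of_nat q + of_nat p) (q - p) = 1"
      using nz by simp
    have "poch_int a (int p - int q) * pochhammer (1 - a) q * (-1)^q
       = poch_int a (int p - int q) * pochhammer (a - of_nat q + of_nat p) (q - p) * pochhammer (a - of_nat q) p"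
      using m pp by (simp add: mult_ac)
    then show ?thesis using X by simp
  qed
qed

lemma core:
  fixes a :: complex
  assumes "a \<notin> \<int>"
  shows "poch_int a (int p - int q) * pochhammer (1 - a) q * (-1)^q - pochhammer a p
    = (\<Sum>k\<in>{1..p}. \<Sum>l\<in>{1..k}. (-1)^k * of_nat (p choose k) * fact k * of_nat ((k-1) choose (l-1))
          * of_nat (q choose l) * pochhammer (a + of_nat k) (p - k))"
proof -
  have "(\<Sum>k\<in>{1..p}. \<Sum>l\<in>{1..k}. (-1)^k * of_nat (p choose k) * fact k * of_nat ((k-1) choose (l-1))
          * of_nat (q choose l) * pochhammer (a + of_nat k) (p - k))
     = (\<Sum>k\<in>{1..p}. of_nat (p choose k) * ((-1)^k * pochhammer (of_nat q) k) * pochhammer (a + of_nat k) (p - k))"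
  proof (intro sum.cong refl)
    fix k assume k: "k \<in> {1..p}"
    have "(\<Sum>l\<in>{1..k}. (-1)^k * of_nat (p choose k) * fact k * of_nat ((k-1) choose (l-1))
          * of_nat (q choose l) * pochhammer (a + of_nat k) (p - k))
       = (-1)^k * of_nat (p choose k) * pochhammer (a + of_nat k) (p - k) * (fact k *
           of_nat (\<Sum>l\<in>{1..k}. ((k-1) choose (l-1)) * (q choose l)))"
      by (simp add: sum_distrib_left mult_ac)
    also have "\<dots> = (-1)^k * of_nat (p choose k) * pochhammer (a + of_nat k) (p - k) * pochhammer (of_nat q) k"
    proof -
      have "fact k * (of_nat (\<Sum>l\<in>{1..k}. ((k-1) choose (l-1)) * (q choose l)) :: complex) = pochhammer (of_nat q) k"
        using k vand2[of k q] fact_choose_poch[of k q] by simp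
      then show ?thesis by simp
    qed
    finally show "(\<Sum>l\<in>{1..k}. (-1)^k * of_nat (p choose k) * fact k * of_nat ((k-1) choose (l-1))
          * of_nat (q choose l) * pochhammer (a + of_nat k) (p - k))
       = of_nat (p choose k) * ((-1)^k * pochhammer (of_nat q) k) * pochhammer (a + of_nat k) (p - k)"
      by (simp add: mult_ac)
  qed
  also have "\<dots> = pochhammer (a - of_nat q) p - pochhammer a p"
  proof -
    have "{..p} = insert 0 {1..p}" by auto
    then have "pochhammer (a - of_nat q) p = pochhammer a p +
       (\<Sum>k\<in>{1..p}. of_nat (p choose k) * ((-1)^k * pochhammer (of_nat q) k) * pochhammer (a + of_nat k) (p - k))"
      using poch_G[of a "of_nat q" p] by simp
    then show ?thesis by simp
  qed
  finally show ?thesis using C1[OF assms] by simp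
qed


lemma term_coeff:
  "coeff2 (fps_const (fps_const c) * fpsX2 ^ k * fpsY2 ^ l * hyp1F1_x al ga * hyp1F1_negy be de) p q
   = (if k \<le> p \<and> l \<le> q then c * hyp1F1_coeff al ga (p-k) * (hyp1F1_coeff be de (q-l) * (-1)^(q-l)) else 0)"
proof -
  define G where "G = Abs_fps (\<lambda>k. hyp1F1_coeff be de k * (-1) ^ k)"
  have e: "fps_const (fps_const c) * fpsX2 ^ k * fpsY2 ^ l * hyp1F1_x al ga * hyp1F1_negy be de
     = fps_X ^ k * (hyp1F1_x al ga * fps_const (fps_const c * fps_X ^ l * G))"
    by (simp add: fpsX2_def fpsY2_def hyp1F1_negy_def G_def mult_ac)
  show ?thesis
    unfolding coeff2_def e fps_X_power_mult_nth fps_mult_right_const_nth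
    by (auto simp: hyp1F1_x_def G_def fps_X_power_mult_nth mult.assoc)
qed


lemma term_alg:
  fixes a b d :: complex
  assumes a: "a \<notin> \<int>" and d: "\<forall>n::nat. d \<noteq> - of_nat n"
    and kl: "1 \<le> l" "l \<le> k" "k \<le> p" "l \<le> q"
  shows "((-1) ^ (k + l) * fact (k - 1) / (fact (l - 1) * fact l * fact (k - l))
           * pochhammer b l / (pochhammer (1 - a) l * pochhammer d k))
        * hyp1F1_coeff (a + of_nat k) (d + of_nat k) (p - k)
        * (hyp1F1_coeff (b + of_nat l) (1 - a + of_nat l) (q - l) * (-1)^(q - l))
      = (pochhammer b q * (-1)^q / (pochhammer d p * pochhammer (1 - a) q * fact p * fact q))
        * ((-1)^k * of_nat (p choose k) * fact k * of_nat ((k-1) choose (l-1))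
          * of_nat (q choose l) * pochhammer (a + of_nat k) (p - k))"
proof -
  have dp: "pochhammer d p = pochhammer d k * pochhammer (d + of_nat k) (p - k)"
    using kl by (intro pochhammer_product) simp
  have ep: "pochhammer (1 - a) q = pochhammer (1 - a) l * pochhammer (1 - a + of_nat l) (q - l)"
    using kl by (intro pochhammer_product) simp
  have bp: "pochhammer b q = pochhammer b l * pochhammer (b + of_nat l) (q - l)"
    using kl by (intro pochhammer_product) simp
  have dnz: "pochhammer d p \<noteq> 0"
    using d by (auto simp: pochhammer_eq_0_iff)
  have enz: "pochhammer (1 - a) q \<noteq> 0"
  proof
    assume "pochhammer (1 - a) q = 0"
    then obtain j where "1 - a = - of_nat j" by (auto simp: pochhammer_eq_0_iff)
    then have "a = of_int (1 + int j)" by (simp add: algebra_simps)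
    then show False using a by (metis Ints_of_int)
  qed
  have d1: "pochhammer d k \<noteq> 0" and d2: "pochhammer (d + of_nat k) (p - k) \<noteq> 0"
    using dnz dp by auto
  have e1: "pochhammer (1 - a) l \<noteq> 0" and e2: "pochhammer (1 - a + of_nat l) (q - l) \<noteq> 0"
    using enz ep by auto
  have b1: "(of_nat (p choose k) :: complex) = fact p / (fact k * fact (p - k))"
    using kl by (intro binomial_fact) simp
  have b2: "(of_nat ((k-1) choose (l-1)) :: complex) = fact (k-1) / (fact (l-1) * fact (k - l))"
    using kl binomial_fact[of "l-1" "k-1", where 'a=complex] by simp
  have b3: "(of_nat (q choose l) :: complex) = fact q / (fact l * fact (q - l))"
    using kl by (intro binomial_fact) simp
  have sg: "(-1::complex) ^ (k + l) * (-1) ^ (q - l) = (-1)^k * (-1)^q"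
  proof -
    have "(-1::complex) ^ (k + l) * (-1) ^ (q - l) = (-1) ^ (k + q)"
      using kl by (simp add: power_add[symmetric])
    then show ?thesis by (simp add: power_add)
  qed
  show ?thesis
    unfolding hyp1F1_coeff_def dp ep bp b1 b2 b3
    using d1 d2 e1 e2 sg
    by (simp add: field_simps)
qed


theorem mainTheorem8:
  fixes a b d :: complex
  assumes "a \<notin> \<int>"
    and "\<forall>n::nat. d \<noteq> - of_nat n"
  shows "fps2_sums
     (\<lambda>k. \<Sum>l\<in>{1..k}.
        fps_const (fps_const
          ((-1) ^ (k + l) * fact (k - 1) / (fact (l - 1) * fact l * fact (k - l))
           * pochhammer b l / (pochhammer (1 - a) l * pochhammer d k)))
        * fpsX2 ^ k * fpsY2 ^ l
        * hyp1F1_x (a + of_nat k) (d + of_nat k)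
        * hyp1F1_negy (b + of_nat l) (1 - a + of_nat l))
     (Horn_H4 a b d - hyp1F1_x a d * hyp1F1_negy b (1 - a))"
  unfolding fps2_sums_def
proof (intro allI exI impI)
  fix N n p q :: nat
  assume nN: "N \<le> n" and pq: "p + q < N"
  define c where "c k l = ((-1) ^ (k + l) * fact (k - 1) / (fact (l - 1) * fact l * fact (k - l))
           * pochhammer b l / (pochhammer (1 - a) l * pochhammer d k))" for k l :: nat
  define F where "F = (pochhammer b q * (-1)^q / (pochhammer d p * pochhammer (1 - a) q * fact p * fact q))"
  define ct where "ct k l = ((-1)^k * of_nat (p choose k) * fact k * of_nat ((k-1) choose (l-1))
          * of_nat (q choose l) * pochhammer (a + of_nat k) (p - k) :: complex)" for k l
  define g where "g k = (\<Sum>l\<in>{1..k}. (if k \<le> p \<and> l \<le> q then c k l * hyp1F1_coeff (a + of_nat k) (d + of_nat k) (p-k)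
       * (hyp1F1_coeff (b + of_nat l) (1 - a + of_nat l) (q-l) * (-1)^(q-l)) else 0))" for k
  have "coeff2 (\<Sum>k<n. \<Sum>l\<in>{1..k}.
        fps_const (fps_const (c k l))
        * fpsX2 ^ k * fpsY2 ^ l
        * hyp1F1_x (a + of_nat k) (d + of_nat k)
        * hyp1F1_negy (b + of_nat l) (1 - a + of_nat l)) p q = (\<Sum>k<n. g k)"
    unfolding coeff2_def fps_sum_nth g_def
    using term_coeff[unfolded coeff2_def] by simp
  also have "\<dots> = (\<Sum>k\<in>{1..p}. g k)"
    using nN pq by (intro sum.mono_neutral_right) (auto simp: g_def)
  also have "\<dots> = (\<Sum>k\<in>{1..p}. \<Sum>l\<in>{1..k}. F * ct k l)"
  proof (intro sum.cong refl)
    fix k assume k: "k \<in> {1..p}"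
    show "g k = (\<Sum>l\<in>{1..k}. F * ct k l)"
      unfolding g_def
    proof (intro sum.cong refl)
      fix l assume l: "l \<in> {1..k}"
      show "(if k \<le> p \<and> l \<le> q then c k l * hyp1F1_coeff (a + of_nat k) (d + of_nat k) (p-k)
       * (hyp1F1_coeff (b + of_nat l) (1 - a + of_nat l) (q-l) * (-1)^(q-l)) else 0) = F * ct k l"
      proof (cases "l \<le> q")
        case True
        then show ?thesis using k l term_alg[OF assms, of l k p q b] by (simp add: c_def F_def ct_def)
      next
        case False
        then show ?thesis by (simp add: ct_def)
      qed
    qed
  qed
  also have "\<dots> = F * (poch_int a (int p - int q) * pochhammer (1 - a) q * (-1)^q - pochhammer a p)"
    unfolding core[OF assms(1)] ct_def by (simp add: sum_distrib_left)
  also have "\<dots> = coeff2 (Horn_H4 a b d - hyp1F1_x a d * hyp1F1_negy b (1 - a)) p q"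
  proof -
    have enz: "pochhammer (1 - a) q \<noteq> 0"
    proof
      assume "pochhammer (1 - a) q = 0"
      then obtain j where "1 - a = - of_nat j" by (auto simp: pochhammer_eq_0_iff)
      then have "a = of_int (1 + int j)" by (simp add: algebra_simps)
      then show False using assms(1) by (metis Ints_of_int)
    qed
    have dnz: "pochhammer d p \<noteq> 0"
      using assms(2) by (auto simp: pochhammer_eq_0_iff)
    have sq: "(-1::complex)^q * (-1)^q = 1"
      by (simp add: power_add[symmetric] flip: mult_2)
    have "coeff2 (Horn_H4 a b d - hyp1F1_x a d * hyp1F1_negy b (1 - a)) p q
       = poch_int a (int p - int q) * pochhammer b q / (pochhammer d p * fact p * fact q)
         - hyp1F1_coeff a d p * (hyp1F1_coeff b (1 - a) q * (-1)^q)"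
      by (simp add: coeff2_def Horn_H4_def hyp1F1_x_def hyp1F1_negy_def)
    then show ?thesis
      unfolding F_def hyp1F1_coeff_def using enz dnz sq
      by (simp add: field_simps)
  qed
  finally show "coeff2 (\<Sum>k<n. \<Sum>l\<in>{1..k}.
        fps_const (fps_const
          ((-1) ^ (k + l) * fact (k - 1) / (fact (l - 1) * fact l * fact (k - l))
           * pochhammer b l / (pochhammer (1 - a) l * pochhammer d k)))
        * fpsX2 ^ k * fpsY2 ^ l
        * hyp1F1_x (a + of_nat k) (d + of_nat k)
        * hyp1F1_negy (b + of_nat l) (1 - a + of_nat l)) p q
     = coeff2 (Horn_H4 a b d - hyp1F1_x a d * hyp1F1_negy b (1 - a)) p q"
    by (simp add: c_def)
qed

end
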